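(* Let $a_j$ ($j\ge2$) be formal variables and $f(x)=1+\sum_{j\ge2}a_jx^j\in\mathbb C[[x]]$. Then for every $n\ge1$, $$\frac{[x^{n+2}]f^{n+1}}{n+1}=\frac12\sum_{j=1}^{n-1}\frac{[x^{j+1}]f^{j}}{j}\cdot\frac{[x^{n-j+1}]f^{n-j}}{n-j}+\frac{[x^{n+2}]f^{n}}{n},$$ where $[x^N]g$ denotes the coefficient of $x^N$ in $g$. *)

theory Defs
  imports Complex_Main "HOL-Computational_Algebra.Formal_Power_Series"
begin

end

theory Submission
  imports Defs
begin
unbundle fps_syntax

lemma L:
  fixes f :: "complex fps"
  assumes f0: "f $ 0 = 1" and p: "p \<ge> 1" and m: "m \<ge> 1"
  shows "(f^(p+1) * fps_deriv (fps_X * inverse f)) $ m = f^p $ m * (of_nat p - of_nat m) / of_nat p"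
proof -
  have fi: "f * inverse f = 1" using f0 by (simp add: inverse_mult_eq_1')
  have d: "fps_deriv (fps_X * inverse f) = inverse f - fps_X * (fps_deriv f * (inverse f)^2)"
    using f0 by (simp add: fps_inverse_deriv)
  have e: "f^(p+1) * fps_deriv (fps_X * inverse f) = f^p - fps_X * (fps_deriv f * f^(p-1))"
  proof -
    have pp: "f^(p+1) = f^p * f" and pq: "f^(p+1) = f^(p-1) * f * f" using p
      by (simp_all add: power_Suc2[symmetric])
    have h1: "f^(p+1) * inverse f = f^p" unfolding pp using fi by (simp add: mult.assoc)
    have h2: "f^(p+1) * (fps_X * (fps_deriv f * (inverse f)^2)) = fps_X * (fps_deriv f * f^(p-1))"
      unfolding pq power2_eq_square
      by (metis (no_types, lifting) fi mult.assoc mult.commute mult.right_neutral)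
    show ?thesis unfolding d right_diff_distrib h1 h2 ..
  qed
  obtain m' where mm: "m = Suc m'" using m by (cases m) auto
  have dp: "fps_deriv (f^p) = of_nat p * fps_deriv f * f^(p-1)" by (rule fps_deriv_power')
  have "fps_deriv (f^p) $ m' = of_nat m * f^p $ m" using mm by simp
  moreover have "fps_deriv (f^p) $ m' = of_nat p * (fps_deriv f * f^(p-1)) $ m'"
    unfolding dp by (simp add: mult.assoc fps_of_nat[symmetric] del: fps_of_nat)
  ultimately have "(fps_deriv f * f^(p-1)) $ m' = of_nat m * f^p $ m / of_nat p"
    using p by (simp add: field_simps)
  then show ?thesis unfolding e using mm p by (simp add: field_simps)
qed

lemma core:
  fixes f :: "complex fps"
  assumes f0: "f $ 0 = 1" and km: "k \<le> m"
  shows "((fps_X * inverse f)^k * (f^(m+1) * fps_deriv (fps_X * inverse f))) $ m = (if k = m then 1 else 0)"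
proof -
  define d where "d = m - k"
  have fi: "f * inverse f = 1" using f0 by (simp add: inverse_mult_eq_1')
  have pw: "(inverse f)^k * f^(m+1) = f^(d+1)"
  proof -
    have "f^(m+1) = f^k * f^(d+1)" using km unfolding d_def by (simp add: power_add[symmetric])
    moreover have "(inverse f)^k * f^k = 1" using fi by (metis mult.commute power_mult_distrib power_one)
    ultimately show ?thesis by (metis mult.assoc mult_1)
  qed
  have "(fps_X * inverse f)^k * (f^(m+1) * fps_deriv (fps_X * inverse f))
        = fps_X^k * (f^(d+1) * fps_deriv (fps_X * inverse f))"
    unfolding power_mult_distrib pw[symmetric] by (simp add: mult.assoc)
  note eq = this
  have nk: "\<not> m < k" using km by simp
  have e: "((fps_X * inverse f)^k * (f^(m+1) * fps_deriv (fps_X * inverse f))) $ m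
        = (f^(d+1) * fps_deriv (fps_X * inverse f)) $ d"
    unfolding eq fps_X_power_mult_nth if_not_P[OF nk] d_def ..
  show ?thesis
  proof (cases "d = 0")
    case True
    then show ?thesis using e km f0 unfolding d_def by simp
  next
    case False
    then show ?thesis using e L[OF f0, of d d] km unfolding d_def by simp
  qed
qed

lemma K:
  fixes f Q :: "complex fps"
  assumes f0: "f $ 0 = 1"
  shows "Q $ m = ((Q oo (fps_X * inverse f)) * (f^(m+1) * fps_deriv (fps_X * inverse f))) $ m"
proof -
  define u where "u = fps_X * inverse f"
  define G where "G = f^(m+1) * fps_deriv u"
  define T where "T = (\<Sum>k=0..m. fps_const (Q$k) * u^k)"
  have u0: "u $ 0 = 0" unfolding u_def by simp
  have agree: "(Q oo u) $ i = T $ i" if "i \<le> m" for i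
  proof -
    have "(Q oo u) $ i = (\<Sum>k=0..i. Q$k * (u^k) $ i)" by (rule fps_compose_nth)
    also have "\<dots> = (\<Sum>k=0..m. Q$k * (u^k) $ i)"
      by (rule sum.mono_neutral_left) (use that startsby_zero_power_prefix[OF u0] in auto)
    also have "\<dots> = T $ i" unfolding T_def fps_sum_nth by simp
    finally show ?thesis .
  qed
  have "((Q oo u) * G) $ m = (T * G) $ m"
    unfolding fps_mult_nth by (rule sum.cong) (use agree in auto)
  also have "T * G = (\<Sum>k=0..m. fps_const (Q$k) * (u^k * G))"
    unfolding T_def sum_distrib_right by (simp add: mult.assoc)
  also have "\<dots> $ m = (\<Sum>k=0..m. Q$k * (u^k * G) $ m)" unfolding fps_sum_nth by simp
  also have "\<dots> = (\<Sum>k=0..m. Q$k * (if k = m then 1 else 0))"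
    by (rule sum.cong) (use core[OF f0] in \<open>auto simp: u_def G_def\<close>)
  also have "\<dots> = (\<Sum>k=0..m. if k = m then Q$k else 0)" by (rule sum.cong) auto
  also have "\<dots> = Q $ m" by (simp add: sum.delta')
  finally show ?thesis unfolding u_def G_def by simp
qed

lemma invpow:
  fixes f :: "complex fps"
  assumes f0: "f $ 0 = 1"
  shows "(inverse f)^r * (f^(s+r) * G) = f^s * G"
proof -
  have fi: "f * inverse f = 1" using f0 by (simp add: inverse_mult_eq_1')
  have "(inverse f)^r * f^r = 1" using fi by (metis mult.commute power_mult_distrib power_one)
  then show ?thesis by (simp add: power_add algebra_simps)
qed

theorem proposition3p6:
  fixes f :: "complex fps" and n :: nat
  assumes "fps_nth f 0 = 1" and "fps_nth f 1 = 0" and "n \<ge> 1"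
  shows "fps_nth (f ^ (n + 1)) (n + 2) / of_nat (n + 1) =
           1 / 2 * (\<Sum>j = 1..n - 1. (fps_nth (f ^ j) (j + 1) / of_nat j) *
                                      (fps_nth (f ^ (n - j)) (n - j + 1) / of_nat (n - j)))
           + fps_nth (f ^ n) (n + 2) / of_nat n"
proof -
  note f0 = assms(1) and f1 = assms(2) and n1 = assms(3)
  define u where "u = fps_X * inverse f"
  define q where "q = fps_ginv (inverse f) u"
  define a where "a j = f^j $ (j+1) / of_nat j" for j
  have u0: "u $ 0 = 0" and u1: "u $ 1 = 1" unfolding u_def using f0 by simp_all
  have qu: "q oo u = inverse f" unfolding q_def using fps_ginv[OF u0] u1 by simp
  have q2u: "q^2 oo u = (inverse f)^2" using fps_compose_power[OF u0, of q 2] qu by simp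
  have fi: "f * inverse f = 1" using f0 by (simp add: inverse_mult_eq_1')
  have q0: "q $ 0 = 1" using arg_cong[OF qu, of "\<lambda>g. g $ 0"] f0 by simp
  have i1: "inverse f $ 1 = 0"
  proof -
    have "(f * inverse f) $ 1 = 0" using fi by simp
    then show ?thesis using f0 f1 by (simp add: fps_mult_nth_1)
  qed
  have q1: "q $ 1 = 0"
  proof -
    have "(q oo u) $ 1 = q $ 1 * u $ 1" by (simp add: fps_compose_nth u0)
    then show ?thesis using qu i1 u1 by simp
  qed
  have qj: "q $ (j+1) = - a j" if "j \<ge> 1" for j
  proof -
    have "q $ (j+1) = (f^(j+1) * fps_deriv u) $ (j+1)"
      using K[OF f0, of q "j+1", unfolded qu[unfolded u_def]]
        invpow[OF f0, of 1 "j+1", unfolded power_one_right] unfolding u_def by (simp only:)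
    also have "\<dots> = - a j" unfolding u_def a_def using L[OF f0 that, of "j+1"] that
      by (simp add: field_simps)
    finally show ?thesis .
  qed
  have q2: "(q^2) $ (n+2) = - 2 * (f^n $ (n+2) / of_nat n)"
  proof -
    have ee: "n + 2 + 1 = n + 1 + 2" by simp
    have "(q^2) $ (n+2) = (f^(n+1) * fps_deriv u) $ (n+2)"
      using K[OF f0, of "q^2" "n+2", unfolded q2u[unfolded u_def] ee]
        invpow[OF f0, of 2 "n+1"] unfolding u_def by (simp only:)
    also have "\<dots> = - 2 * (f^n $ (n+2) / of_nat n)" unfolding u_def using L[OF f0 n1, of "n+2"] n1
      by (simp add: field_simps)
    finally show ?thesis .
  qed
  define F where "F i = q $ i * q $ (n + 2 - i)" for i
  have "(q^2) $ (n+2) = (\<Sum>i=0..n+2. F i)" unfolding F_def power2_eq_square fps_mult_nth ..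
  also have "\<dots> = F 0 + F 1 + (\<Sum>i=2..n. F i) + F (n+1) + F (n+2)"
  proof -
    have "(\<Sum>i=0..n+2. F i) = F 0 + (\<Sum>i=1..n+2. F i)" by (simp add: sum.atLeast_Suc_atMost)
    moreover have "(\<Sum>i=1..n+2. F i) = F 1 + (\<Sum>i=2..n+2. F i)"
      using sum.atLeast_Suc_atMost[of 1 "n+2" F] by (simp add: numeral_2_eq_2)
    moreover have "(\<Sum>i=2..n+2. F i) = (\<Sum>i=2..n+1. F i) + F (n+2)"
      by (simp add: sum.cl_ivl_Suc)
    moreover have "(\<Sum>i=2..n+1. F i) = (\<Sum>i=2..n. F i) + F (n+1)"
      using n1 by (simp add: sum.cl_ivl_Suc)
    ultimately show ?thesis by (simp add: algebra_simps)
  qed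
  also have "F 0 = - a (n+1)" unfolding F_def using q0 qj[of "n+1"] by simp
  also have "F 1 = 0" unfolding F_def using q1 by simp
  also have "F (n+1) = 0" unfolding F_def using q1 by simp
  also have "F (n+2) = - a (n+1)" unfolding F_def using q0 qj[of "n+1"] by simp
  also have "(\<Sum>i=2..n. F i) = (\<Sum>j=1..n-1. a j * a (n-j))"
  proof -
    have "(\<Sum>i=2..n. F i) = (\<Sum>j=1..n-1. F (Suc j))"
    proof -
      have "{2..n} = {Suc 1..Suc (n-1)}" using n1 by auto
      then show ?thesis by (simp only: sum.shift_bounds_cl_Suc_ivl)
    qed
    also have "\<dots> = (\<Sum>j=1..n-1. a j * a (n-j))"
    proof (rule sum.cong)
      fix j assume j: "j \<in> {1..n-1}"
      have "n + 2 - Suc j = (n - j) + 1" using j by auto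
      moreover have "n - j \<ge> 1" using j by auto
      moreover have sj: "Suc n - j = Suc (n - j)" using j by auto
      then show "F (Suc j) = a j * a (n-j)" unfolding F_def
        using qj[of j] qj[of "n-j"] j by (auto simp: sj)
    qed simp
    finally show ?thesis .
  qed
  finally have "- 2 * (f^n $ (n+2) / of_nat n) = - a (n+1) + 0 + (\<Sum>j=1..n-1. a j * a (n-j)) + 0 - a (n+1)"
    using q2 by simp
  then show ?thesis unfolding a_def by (simp add: field_simps)
qed

end
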